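(* Let $G$ be a finite nested group with chain of centers $G=X_0>X_1>\dots>X_n\ge1$. If $N$ is a normal subgroup of $G$, then for each $i=1,\dots,n$ either $[X_{i-1},G]\le N$ or $N\le X_i$.
   Context: For $\chi\in\mathrm{Irr}(G)$, $Z(\chi)=\{g\in G: |\chi(g)|=\chi(1)\}$. $G$ is nested if for all $\chi,\psi\in\mathrm{Irr}(G)$ either $Z(\chi)\le Z(\psi)$ or $Z(\psi)\le Z(\chi)$; then the distinct subgroups $Z(\chi)$, $\chi\in\mathrm{Irr}(G)$, form a chain $G=X_0>X_1>\dots>X_n\ge1$, the chain of centers. *)

theory Defs
  imports "HOL-Algebra.Algebra" "Jordan_Normal_Form.Matrix"
begin

definition is_rep :: "('a, 'b) monoid_scheme \<Rightarrow> nat \<Rightarrow> ('a \<Rightarrow> complex mat) \<Rightarrow> bool" where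
  "is_rep G d \<rho> \<longleftrightarrow>
     (\<forall>g \<in> carrier G. \<rho> g \<in> carrier_mat d d) \<and>
     \<rho> \<one>\<^bsub>G\<^esub> = 1\<^sub>m d \<and>
     (\<forall>g \<in> carrier G. \<forall>h \<in> carrier G. \<rho> (g \<otimes>\<^bsub>G\<^esub> h) = \<rho> g * \<rho> h)"

definition is_subspace :: "nat \<Rightarrow> complex vec set \<Rightarrow> bool" where
  "is_subspace d W \<longleftrightarrow> W \<subseteq> carrier_vec d \<and> 0\<^sub>v d \<in> W \<and>
     (\<forall>v \<in> W. \<forall>w \<in> W. v + w \<in> W) \<and> (\<forall>c. \<forall>v \<in> W. c \<cdot>\<^sub>v v \<in> W)"

definition irreducible_rep :: "('a, 'b) monoid_scheme \<Rightarrow> nat \<Rightarrow> ('a \<Rightarrow> complex mat) \<Rightarrow> bool" where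
  "irreducible_rep G d \<rho> \<longleftrightarrow> is_rep G d \<rho> \<and> d > 0 \<and>
     \<not> (\<exists>W. is_subspace d W \<and> W \<noteq> {0\<^sub>v d} \<and> W \<noteq> carrier_vec d \<and>
            (\<forall>g \<in> carrier G. \<forall>w \<in> W. \<rho> g *\<^sub>v w \<in> W))"

definition mat_trace :: "complex mat \<Rightarrow> complex" where
  "mat_trace A = (\<Sum>i<dim_row A. A $$ (i, i))"

definition Irr :: "('a, 'b) monoid_scheme \<Rightarrow> ('a \<Rightarrow> complex) set" where
  "Irr G = {\<chi>. \<exists>d \<rho>. irreducible_rep G d \<rho> \<and>
                (\<forall>g. \<chi> g = (if g \<in> carrier G then mat_trace (\<rho> g) else 0))}"

definition char_center :: "('a, 'b) monoid_scheme \<Rightarrow> ('a \<Rightarrow> complex) \<Rightarrow> 'a set" where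
  "char_center G \<chi> = {g \<in> carrier G. complex_of_real (cmod (\<chi> g)) = \<chi> \<one>\<^bsub>G\<^esub>}"

definition nested :: "('a, 'b) monoid_scheme \<Rightarrow> bool" where
  "nested G \<longleftrightarrow> (\<forall>\<chi> \<in> Irr G. \<forall>\<psi> \<in> Irr G.
      char_center G \<chi> \<subseteq> char_center G \<psi> \<or> char_center G \<psi> \<subseteq> char_center G \<chi>)"

definition commutator_subgroup :: "('a, 'b) monoid_scheme \<Rightarrow> 'a set \<Rightarrow> 'a set \<Rightarrow> 'a set" where
  "commutator_subgroup G A B = generate G
     (\<Union>a\<in>A. \<Union>b\<in>B. {inv\<^bsub>G\<^esub> a \<otimes>\<^bsub>G\<^esub> inv\<^bsub>G\<^esub> b \<otimes>\<^bsub>G\<^esub> a \<otimes>\<^bsub>G\<^esub> b})"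

end

theory Submission
  imports Defs "Jordan_Normal_Form.Determinant"
begin


definition ip :: "nat \<Rightarrow> complex vec \<Rightarrow> complex vec \<Rightarrow> complex" where
  "ip d v w = (\<Sum>r<d. v$r * cnj (w$r))"

definition lc :: "nat \<Rightarrow> nat \<Rightarrow> (nat \<Rightarrow> complex) \<Rightarrow> complex vec list \<Rightarrow> complex vec" where
  "lc d n c vs = vec d (\<lambda>r. \<Sum>l<n. c l * (vs!l $ r))"

lemma ip_lc: "ip d (lc d n c vs) y = (\<Sum>l<n. c l * ip d (vs!l) y)"
proof -
  have "ip d (lc d n c vs) y = (\<Sum>r<d. \<Sum>l<n. c l * (vs!l $ r) * cnj (y$r))"
    unfolding ip_def lc_def by (simp add: sum_distrib_right)
  also have "\<dots> = (\<Sum>l<n. \<Sum>r<d. c l * (vs!l $ r) * cnj (y$r))" by (rule sum.swap)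
  also have "\<dots> = (\<Sum>l<n. c l * ip d (vs!l) y)"
    unfolding ip_def by (simp add: sum_distrib_left mult.assoc)
  finally show ?thesis .
qed

lemma ip_lc_right: "ip d y (lc d n c vs) = (\<Sum>l<n. cnj (c l) * ip d y (vs!l))"
proof -
  have "ip d y (lc d n c vs) = (\<Sum>r<d. \<Sum>l<n. cnj (c l) * (y $ r * cnj (vs!l $ r)))"
    unfolding ip_def lc_def by (simp add: sum_distrib_left mult.left_commute)
  also have "\<dots> = (\<Sum>l<n. \<Sum>r<d. cnj (c l) * (y $ r * cnj (vs!l $ r)))" by (rule sum.swap)
  also have "\<dots> = (\<Sum>l<n. cnj (c l) * ip d y (vs!l))"
    unfolding ip_def by (simp add: sum_distrib_left)
  finally show ?thesis .
qed

lemma cnj_ip: "cnj (ip d v w) = ip d w v"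
  unfolding ip_def by (simp add: mult.commute)

lemma mult_vec_index:
  assumes A: "A \<in> carrier_mat d d" and v: "v \<in> carrier_vec d" and i: "i < d"
  shows "(A *\<^sub>v v) $ i = (\<Sum>j<d. A $$ (i,j) * v $ j)"
proof -
  have "(A *\<^sub>v v) $ i = row A i \<bullet> v" using A i by simp
  also have "\<dots> = (\<Sum>j\<in>{0..<d}. row A i $ j * v $ j)" using v by (simp add: scalar_prod_def)
  also have "\<dots> = (\<Sum>j<d. A $$ (i,j) * v $ j)" using A i
    by (auto simp: atLeast0LessThan intro!: sum.cong)
  finally show ?thesis .
qed

lemma lc_carrier[simp]: "lc d n c vs \<in> carrier_vec d"
  by (simp add: lc_def)

lemma lc_dim[simp]: "dim_vec (lc d n c vs) = d"
  by (simp add: lc_def)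

lemma mult_lc:
  assumes A: "A \<in> carrier_mat d d" and n: "n \<le> length vs"
    and vs: "\<And>l. l < n \<Longrightarrow> vs!l \<in> carrier_vec d"
  shows "A *\<^sub>v lc d n c vs = lc d n c (map (\<lambda>v. A *\<^sub>v v) vs)"
proof (rule eq_vecI)
  show "dim_vec (A *\<^sub>v lc d n c vs) = dim_vec (lc d n c (map (\<lambda>v. A *\<^sub>v v) vs))"
    using A by (simp add: lc_def)
  fix i assume i: "i < dim_vec (lc d n c (map (\<lambda>v. A *\<^sub>v v) vs))"
  hence i: "i < d" by (simp add: lc_def)
  have "(A *\<^sub>v lc d n c vs) $ i = (\<Sum>j<d. A $$ (i,j) * (\<Sum>l<n. c l * (vs!l $ j)))"
    using mult_vec_index[OF A lc_carrier i] i by (simp add: lc_def)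
  also have "\<dots> = (\<Sum>j<d. \<Sum>l<n. c l * (A $$ (i,j) * (vs!l $ j)))"
    by (simp add: sum_distrib_left mult.left_commute)
  also have "\<dots> = (\<Sum>l<n. \<Sum>j<d. c l * (A $$ (i,j) * (vs!l $ j)))" by (rule sum.swap)
  also have "\<dots> = (\<Sum>l<n. c l * ((A *\<^sub>v vs!l) $ i))"
  proof (rule sum.cong[OF refl])
    fix l assume "l \<in> {..<n}"
    hence "vs!l \<in> carrier_vec d" using vs by auto
    thus "(\<Sum>j<d. c l * (A $$ (i,j) * (vs!l $ j))) = c l * ((A *\<^sub>v vs!l) $ i)"
      using mult_vec_index[OF A _ i] by (simp add: sum_distrib_left)
  qed
  also have "\<dots> = lc d n c (map (\<lambda>v. A *\<^sub>v v) vs) $ i"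
  proof -
    have "\<And>l. l \<in> {..<n} \<Longrightarrow> map (\<lambda>v. A *\<^sub>v v) vs ! l = A *\<^sub>v vs!l" using n by auto
    thus ?thesis unfolding lc_def using i by (auto intro!: sum.cong)
  qed
  finally show "(A *\<^sub>v lc d n c vs) $ i = lc d n c (map (\<lambda>v. A *\<^sub>v v) vs) $ i" .
qed

definition adj :: "complex mat \<Rightarrow> complex mat" where
  "adj A = mat (dim_col A) (dim_row A) (\<lambda>(i,j). cnj (A $$ (j,i)))"

lemma adj_carrier: "A \<in> carrier_mat d d \<Longrightarrow> adj A \<in> carrier_mat d d"
  by (auto simp: adj_def)

lemma adj_adj: "A \<in> carrier_mat d d \<Longrightarrow> adj (adj A) = A"
  by (auto simp: adj_def)

lemma ip_mult_adj:
  assumes A: "A \<in> carrier_mat d d" and v: "v \<in> carrier_vec d" and w: "w \<in> carrier_vec d"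
  shows "ip d (A *\<^sub>v v) w = ip d v (adj A *\<^sub>v w)"
proof -
  have AA: "adj A \<in> carrier_mat d d" using A by (rule adj_carrier)
  have "ip d (A *\<^sub>v v) w = (\<Sum>r<d. (\<Sum>j<d. A $$ (r,j) * v $ j) * cnj (w $ r))"
    unfolding ip_def using mult_vec_index[OF A v] by simp
  also have "\<dots> = (\<Sum>r<d. \<Sum>j<d. v $ j * (A $$ (r,j) * cnj (w $ r)))"
    by (simp add: sum_distrib_left sum_distrib_right mult.commute mult.left_commute)
  also have "\<dots> = (\<Sum>j<d. \<Sum>r<d. v $ j * (A $$ (r,j) * cnj (w $ r)))" by (rule sum.swap)
  also have "\<dots> = (\<Sum>j<d. v $ j * cnj (\<Sum>r<d. cnj (A $$ (r,j)) * w $ r))"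
    by (simp add: sum_distrib_left)
  also have "\<dots> = ip d v (adj A *\<^sub>v w)"
    unfolding ip_def using mult_vec_index[OF AA w] A by (simp add: adj_def)
  finally show ?thesis .
qed




definition onl :: "nat \<Rightarrow> complex vec list \<Rightarrow> bool" where
  "onl d vs \<longleftrightarrow> set vs \<subseteq> carrier_vec d \<and>
     (\<forall>i<length vs. \<forall>j<length vs. ip d (vs!i) (vs!j) = (if i = j then 1 else 0))"

definition proj :: "nat \<Rightarrow> complex vec list \<Rightarrow> complex vec \<Rightarrow> complex vec" where
  "proj d vs x = lc d (length vs) (\<lambda>l. ip d x (vs!l)) vs"

lemma proj_carrier[simp]: "proj d vs x \<in> carrier_vec d"
  by (simp add: proj_def)

lemma ip_proj:
  assumes o: "onl d vs" and j: "j < length vs"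
  shows "ip d (proj d vs x) (vs!j) = ip d x (vs!j)"
proof -
  have "ip d (proj d vs x) (vs!j) = (\<Sum>l<length vs. ip d x (vs!l) * ip d (vs!l) (vs!j))"
    unfolding proj_def by (rule ip_lc)
  also have "\<dots> = (\<Sum>l<length vs. if l = j then ip d x (vs!j) else 0)"
    using o j by (intro sum.cong) (auto simp: onl_def)
  also have "\<dots> = ip d x (vs!j)" using j by simp
  finally show ?thesis .
qed

lemma ip_self: "ip d v v = complex_of_real (\<Sum>r<d. (cmod (v$r))^2)"
  unfolding ip_def of_real_sum by (intro sum.cong refl) (simp only: complex_norm_square)

lemma ip_self_pos:
  assumes v: "v \<in> carrier_vec d" and nz: "v \<noteq> 0\<^sub>v d"
  shows "0 < (\<Sum>r<d. (cmod (v$r))^2)"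
proof -
  obtain r where r: "r < d" "v $ r \<noteq> 0" using v nz by (metis carrier_vecD eq_vecI index_zero_vec(1) index_zero_vec(2))
  have "0 < (cmod (v$r))^2" using r by simp
  also have "\<dots> \<le> (\<Sum>r<d. (cmod (v$r))^2)"
    by (rule member_le_sum) (use r in auto)
  finally show ?thesis .
qed

lemma ip_smult: "v \<in> carrier_vec d \<Longrightarrow> ip d (c \<cdot>\<^sub>v v) w = c * ip d v w"
  unfolding ip_def by (auto simp: sum_distrib_left mult.assoc intro!: sum.cong)

lemma onl_snoc:
  assumes o: "onl d vs" and u: "u \<in> carrier_vec d"
    and orth: "\<And>j. j < length vs \<Longrightarrow> ip d u (vs!j) = 0" and uu: "ip d u u = 1"
  shows "onl d (vs @ [u])"
  unfolding onl_def
proof (intro conjI allI impI)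
  show "set (vs @ [u]) \<subseteq> carrier_vec d" using o u by (auto simp: onl_def)
  fix i j assume i: "i < length (vs @ [u])" and j: "j < length (vs @ [u])"
  show "ip d ((vs @ [u]) ! i) ((vs @ [u]) ! j) = (if i = j then 1 else 0)"
  proof (cases "i < length vs")
    case True note iT = this
    show ?thesis
    proof (cases "j < length vs")
      case True thus ?thesis using iT o by (auto simp: onl_def nth_append)
    next
      case False hence "j = length vs" using j by auto
      thus ?thesis using iT orth[OF iT] cnj_ip[of d u "vs!i"] by (auto simp: nth_append)
    qed
  next
    case False hence iv: "i = length vs" using i by auto
    show ?thesis
    proof (cases "j < length vs")
      case True thus ?thesis using iv orth[OF True] by (auto simp: nth_append)
    next
      case False hence "j = length vs" using j by auto
      thus ?thesis using iv uu by (auto simp: nth_append)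
    qed
  qed
qed

lemma onl_length:
  assumes o: "onl d vs" shows "length vs \<le> d"
proof (rule ccontr)
  assume "\<not> length vs \<le> d"
  hence dm: "d < length vs" by simp
  define m where "m = length vs"
  define M where "M = mat m m (\<lambda>(i,j). if i < d then vs!j $ i else 0)"
  define P where "P = mat m m (\<lambda>(i,j). cnj (M $$ (j,i)))"
  have M: "M \<in> carrier_mat m m" and P: "P \<in> carrier_mat m m" by (auto simp: M_def P_def)
  have "P * M = 1\<^sub>m m"
  proof (rule eq_matI)
    fix i j assume i: "i < dim_row (1\<^sub>m m)" and j: "j < dim_col (1\<^sub>m m)"
    hence i: "i < m" and j: "j < m" by auto
    have "(P * M) $$ (i,j) = (\<Sum>l<m. P $$ (i,l) * M $$ (l,j))"
      using i j M P by (auto simp: scalar_prod_def atLeast0LessThan intro!: sum.cong)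
    also have "\<dots> = (\<Sum>l<m. if l < d then vs!j $ l * cnj (vs!i $ l) else 0)"
      using i j by (auto simp: P_def M_def intro!: sum.cong)
    also have "\<dots> = (\<Sum>l\<in>{..<m} \<inter> {l. l < d}. vs!j $ l * cnj (vs!i $ l))"
      by (simp add: sum.inter_restrict)
    also have "{..<m} \<inter> {l. l < d} = {..<d}" using dm m_def by auto
    also have "(\<Sum>l<d. vs!j $ l * cnj (vs!i $ l)) = ip d (vs!j) (vs!i)" by (simp add: ip_def)
    also have "\<dots> = 1\<^sub>m m $$ (i,j)" using o i j m_def by (auto simp: onl_def)
    finally show "(P * M) $$ (i,j) = 1\<^sub>m m $$ (i,j)" .
  qed (use M P in auto)
  hence MP: "M * P = 1\<^sub>m m" using mat_mult_left_right_inverse[OF P M] by simp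
  have "(M * P) $$ (d,d) = (\<Sum>l<m. M $$ (d,l) * P $$ (l,d))"
    using dm m_def M P by (auto simp: scalar_prod_def atLeast0LessThan intro!: sum.cong)
  also have "\<dots> = 0" using dm m_def by (auto simp: M_def intro!: sum.neutral)
  finally show False using MP dm m_def by simp
qed

lemma lc_in_subspace:
  assumes S: "is_subspace d S" and vs: "\<And>l. l < n \<Longrightarrow> vs!l \<in> S"
  shows "lc d n c vs \<in> S"
  using vs
proof (induction n)
  case 0
  have "lc d 0 c vs = 0\<^sub>v d" by (auto simp: lc_def)
  thus ?case using S by (simp add: is_subspace_def)
next
  case (Suc n)
  have IH: "lc d n c vs \<in> S" using Suc by auto
  have vn: "vs!n \<in> S" using Suc by auto
  have Sc: "S \<subseteq> carrier_vec d" using S by (simp add: is_subspace_def)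
  have "lc d (Suc n) c vs = lc d n c vs + c n \<cdot>\<^sub>v vs!n"
    using vn Sc by (intro eq_vecI) (auto simp: lc_def)
  also have "\<dots> \<in> S" using S IH vn by (simp add: is_subspace_def)
  finally show ?case .
qed

lemma proj_in_subspace:
  assumes S: "is_subspace d S" and vs: "set vs \<subseteq> S"
  shows "proj d vs x \<in> S"
  unfolding proj_def by (rule lc_in_subspace[OF S]) (use vs in auto)

lemma ext_onl:
  assumes S: "is_subspace d S" and p: "onl d p" "set p \<subseteq> S"
  shows "\<exists>q. onl d (p @ q) \<and> set q \<subseteq> S \<and> (\<forall>x\<in>S. proj d (p @ q) x = x)"
proof -
  define P where "P l \<longleftrightarrow> (\<exists>q. length q = l \<and> onl d (p @ q) \<and> set q \<subseteq> S)" for l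
  have P0: "P 0" using p by (auto simp: P_def)
  have bound: "\<forall>l. P l \<longrightarrow> l < Suc d"
    using onl_length by (fastforce simp: P_def)
  obtain l0 where l0: "P l0" and lmax: "\<And>l. P l \<Longrightarrow> l \<le> l0"
    using ex_has_greatest_nat[OF P0 bound] by blast
  obtain q where q: "length q = l0" "onl d (p @ q)" "set q \<subseteq> S" using l0 by (auto simp: P_def)
  have Sc: "S \<subseteq> carrier_vec d" using S by (simp add: is_subspace_def)
  have pqS: "set (p @ q) \<subseteq> S" using p q by auto
  have "\<forall>x\<in>S. proj d (p @ q) x = x"
  proof (rule ballI, rule ccontr)
    fix x assume xS: "x \<in> S" and ne: "proj d (p @ q) x \<noteq> x"
    have x: "x \<in> carrier_vec d" using xS Sc by auto
    define vs where "vs = p @ q"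
    define y where "y = x + (-1) \<cdot>\<^sub>v proj d vs x"
    have yS: "y \<in> S" unfolding y_def using S xS proj_in_subspace[OF S pqS]
      by (simp add: is_subspace_def vs_def)
    have y: "y \<in> carrier_vec d" using yS Sc by auto
    have yr: "y $ r = x $ r - proj d vs x $ r" if "r < d" for r
        using x that unfolding y_def by (simp add: proj_def)
    have ynz: "y \<noteq> 0\<^sub>v d"
    proof
      assume "y = 0\<^sub>v d"
      moreover note yr
      ultimately have "\<And>r. r < d \<Longrightarrow> x $ r = proj d vs x $ r"
        by (metis eq_iff_diff_eq_0 index_zero_vec(1))
      hence "proj d vs x = x" using x by (intro eq_vecI) auto
      thus False using ne vs_def by simp
    qed
    have yorth: "ip d y (vs!j) = 0" if j: "j < length vs" for j
    proof -
      have "ip d y (vs!j) = ip d x (vs!j) - ip d (proj d vs x) (vs!j)"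
      proof -
        have "ip d y (vs!j) = (\<Sum>r<d. x $ r * cnj (vs ! j $ r) - proj d vs x $ r * cnj (vs ! j $ r))"
          unfolding ip_def using yr by (auto simp: left_diff_distrib intro!: sum.cong)
        thus ?thesis unfolding ip_def by (simp add: sum_subtractf)
      qed
      thus ?thesis using ip_proj[OF q(2)[folded vs_def] j] by simp
    qed
    define s where "s = (\<Sum>r<d. (cmod (y$r))^2)"
    have s: "0 < s" using ip_self_pos[OF y ynz] s_def by simp
    define u where "u = complex_of_real (1 / sqrt s) \<cdot>\<^sub>v y"
    have u: "u \<in> carrier_vec d" using y u_def by simp
    have uS: "u \<in> S" using S yS u_def by (simp add: is_subspace_def)
    have uorth: "ip d u (vs!j) = 0" if "j < length vs" for j
      using yorth[OF that] ip_smult[OF y] u_def by simp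
    have "ip d u u = complex_of_real (1 / sqrt s) * cnj (complex_of_real (1 / sqrt s)) * ip d y y"
      unfolding u_def ip_def using y by (auto simp: sum_distrib_left ac_simps intro!: sum.cong)
    also have "\<dots> = complex_of_real (1 / sqrt s) * complex_of_real (1 / sqrt s) * complex_of_real s"
    proof -
      have "ip d y y = complex_of_real s" by (simp only: ip_self s_def)
      thus ?thesis by simp
    qed
    also have "\<dots> = complex_of_real (1 / sqrt s * (1 / sqrt s) * s)" by (simp only: of_real_mult)
    also have "1 / sqrt s * (1 / sqrt s) * s = 1"
    proof -
      have "sqrt s * sqrt s = s" using s by simp
      thus ?thesis using s by (simp add: field_simps)
    qed
    finally have uu: "ip d u u = 1" by simp
    have "onl d (vs @ [u])" by (rule onl_snoc[OF q(2)[folded vs_def] u uorth uu])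
    hence "P (Suc l0)" unfolding P_def vs_def using q uS
      by (intro exI[of _ "q @ [u]"]) auto
    thus False using lmax by fastforce
  qed
  thus ?thesis using q by blast
qed




lemma sum_lessThan_add_split: "(\<Sum>l<(a::nat)+b. f l) = (\<Sum>l<a. f l) + (\<Sum>l<b. f (a+l))"
  by (induction b) (auto simp: add.assoc)

definition urep :: "('a, 'b) monoid_scheme \<Rightarrow> nat \<Rightarrow> ('a \<Rightarrow> complex mat) \<Rightarrow> bool" where
  "urep G d \<rho> \<longleftrightarrow> is_rep G d \<rho> \<and> (\<forall>h\<in>carrier G. \<rho> (inv\<^bsub>G\<^esub> h) = adj (\<rho> h))"

definition comp :: "nat \<Rightarrow> ('a \<Rightarrow> complex mat) \<Rightarrow> complex vec list \<Rightarrow> 'a \<Rightarrow> complex mat" where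
  "comp d \<rho> vs h = mat (length vs) (length vs) (\<lambda>(i,j). ip d (\<rho> h *\<^sub>v vs!j) (vs!i))"

lemma onl_carrier: "onl d vs \<Longrightarrow> l < length vs \<Longrightarrow> vs!l \<in> carrier_vec d"
  by (auto simp: onl_def)

lemma onl_ip: "onl d vs \<Longrightarrow> i < length vs \<Longrightarrow> j < length vs \<Longrightarrow> ip d (vs!i) (vs!j) = (if i = j then 1 else 0)"
  by (auto simp: onl_def)

lemma expand_ip:
  assumes o: "onl d vs" and A: "A \<in> carrier_mat d d" and y: "proj d vs y = y"
  shows "ip d (A *\<^sub>v y) w = (\<Sum>l<length vs. ip d y (vs!l) * ip d (A *\<^sub>v vs!l) w)"
proof -
  have "A *\<^sub>v y = A *\<^sub>v proj d vs y" using y by simp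
  also have "\<dots> = lc d (length vs) (\<lambda>l. ip d y (vs!l)) (map (\<lambda>v. A *\<^sub>v v) vs)"
    unfolding proj_def by (rule mult_lc[OF A]) (use o onl_carrier in auto)
  finally have "ip d (A *\<^sub>v y) w = (\<Sum>l<length vs. ip d y (vs!l) * ip d (map (\<lambda>v. A *\<^sub>v v) vs ! l) w)"
    by (simp add: ip_lc)
  thus ?thesis by simp
qed

lemma comp_rep:
  fixes G (structure)
  assumes G: "group G" and \<rho>: "urep G d \<rho>" and o: "onl d vs" and vsS: "set vs \<subseteq> S"
    and Sc: "S \<subseteq> carrier_vec d"
    and spn: "\<forall>x\<in>S. proj d vs x = x" and inv: "\<forall>h\<in>carrier G. \<forall>x\<in>S. \<rho> h *\<^sub>v x \<in> S"
  shows "urep G (length vs) (comp d \<rho> vs)"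
    and "\<And>x. x \<in> carrier G \<Longrightarrow> \<rho> x = 1\<^sub>m d \<Longrightarrow> comp d \<rho> vs x = 1\<^sub>m (length vs)"
    and "\<And>x. x \<in> carrier G \<Longrightarrow> comp d \<rho> vs x = 1\<^sub>m (length vs) \<Longrightarrow> \<forall>v\<in>set vs. \<rho> x *\<^sub>v v = v"
proof -
  interpret group G by (rule G)
  let ?k = "length vs"
  have rep: "is_rep G d \<rho>" and un: "\<And>h. h \<in> carrier G \<Longrightarrow> \<rho> (inv h) = adj (\<rho> h)"
    using \<rho> by (auto simp: urep_def)
  have rc: "\<And>h. h \<in> carrier G \<Longrightarrow> \<rho> h \<in> carrier_mat d d" using rep by (auto simp: is_rep_def)
  have r1: "\<rho> \<one> = 1\<^sub>m d" using rep by (auto simp: is_rep_def)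
  have rm: "\<And>h h'. h \<in> carrier G \<Longrightarrow> h' \<in> carrier G \<Longrightarrow> \<rho> (h \<otimes> h') = \<rho> h * \<rho> h'"
    using rep by (auto simp: is_rep_def)
  have vc: "\<And>l. l < ?k \<Longrightarrow> vs!l \<in> carrier_vec d" using o onl_carrier by auto
  have vS: "\<And>l. l < ?k \<Longrightarrow> vs!l \<in> S" using vsS by auto
  have one: "comp d \<rho> vs x = 1\<^sub>m ?k" if "x \<in> carrier G" "\<rho> x = 1\<^sub>m d" for x
  proof (rule eq_matI)
    fix i j assume "i < dim_row (1\<^sub>m ?k)" "j < dim_col (1\<^sub>m ?k)"
    hence i: "i < ?k" and j: "j < ?k" by auto
    show "comp d \<rho> vs x $$ (i,j) = 1\<^sub>m ?k $$ (i,j)"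
      using i j that vc[OF j] onl_ip[OF o j i] by (auto simp: comp_def)
  qed (auto simp: comp_def)
  show "\<And>x. x \<in> carrier G \<Longrightarrow> \<rho> x = 1\<^sub>m d \<Longrightarrow> comp d \<rho> vs x = 1\<^sub>m ?k" by (rule one)
  show "urep G ?k (comp d \<rho> vs)"
    unfolding urep_def is_rep_def
  proof (intro conjI ballI)
    fix g assume "g \<in> carrier G"
    show "comp d \<rho> vs g \<in> carrier_mat ?k ?k" by (simp add: comp_def)
  next
    show "comp d \<rho> vs \<one> = 1\<^sub>m ?k" by (rule one) (auto simp: r1)
  next
    fix h h' assume h: "h \<in> carrier G" and h': "h' \<in> carrier G"
    show "comp d \<rho> vs (h \<otimes> h') = comp d \<rho> vs h * comp d \<rho> vs h'"
    proof (rule eq_matI)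
      fix i j assume "i < dim_row (comp d \<rho> vs h * comp d \<rho> vs h')" "j < dim_col (comp d \<rho> vs h * comp d \<rho> vs h')"
      hence i: "i < ?k" and j: "j < ?k" by (auto simp: comp_def)
      define y where "y = \<rho> h' *\<^sub>v vs!j"
      have yS: "y \<in> S" using inv h' vS[OF j] y_def by auto
      have "comp d \<rho> vs (h \<otimes> h') $$ (i,j) = ip d (\<rho> h *\<^sub>v y) (vs!i)"
        using i j rm[OF h h'] rc[OF h] rc[OF h'] vc[OF j] by (simp add: comp_def y_def)
      also have "\<dots> = (\<Sum>l<?k. ip d y (vs!l) * ip d (\<rho> h *\<^sub>v vs!l) (vs!i))"
        by (rule expand_ip[OF o rc[OF h]]) (use spn yS in auto)
      also have "\<dots> = (\<Sum>l<?k. comp d \<rho> vs h $$ (i,l) * comp d \<rho> vs h' $$ (l,j))"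
        using i j by (auto simp: comp_def y_def intro!: sum.cong)
      also have "\<dots> = (comp d \<rho> vs h * comp d \<rho> vs h') $$ (i,j)"
        using i j by (auto simp: comp_def scalar_prod_def atLeast0LessThan intro!: sum.cong)
      finally show "comp d \<rho> vs (h \<otimes> h') $$ (i,j) = (comp d \<rho> vs h * comp d \<rho> vs h') $$ (i,j)" .
    qed (auto simp: comp_def)
  next
    fix h assume h: "h \<in> carrier G"
    show "comp d \<rho> vs (inv h) = adj (comp d \<rho> vs h)"
    proof (rule eq_matI)
      fix i j assume "i < dim_row (adj (comp d \<rho> vs h))" "j < dim_col (adj (comp d \<rho> vs h))"
      hence i: "i < ?k" and j: "j < ?k" by (auto simp: comp_def adj_def)
      have "comp d \<rho> vs (inv h) $$ (i,j) = ip d (adj (\<rho> h) *\<^sub>v vs!j) (vs!i)"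
        using i j un[OF h] by (simp add: comp_def)
      also have "\<dots> = ip d (vs!j) (adj (adj (\<rho> h)) *\<^sub>v vs!i)"
        by (rule ip_mult_adj[OF adj_carrier[OF rc[OF h]] vc[OF j] vc[OF i]])
      also have "\<dots> = ip d (vs!j) (\<rho> h *\<^sub>v vs!i)" using adj_adj[OF rc[OF h]] by simp
      also have "\<dots> = cnj (ip d (\<rho> h *\<^sub>v vs!i) (vs!j))" by (simp add: cnj_ip)
      also have "\<dots> = adj (comp d \<rho> vs h) $$ (i,j)" using i j by (simp add: comp_def adj_def)
      finally show "comp d \<rho> vs (inv h) $$ (i,j) = adj (comp d \<rho> vs h) $$ (i,j)" .
    qed (auto simp: comp_def adj_def)
  qed
  show "\<forall>v\<in>set vs. \<rho> x *\<^sub>v v = v" if x: "x \<in> carrier G" and cx: "comp d \<rho> vs x = 1\<^sub>m ?k" for x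
  proof
    fix v assume "v \<in> set vs"
    then obtain j where j: "j < ?k" and vj: "v = vs!j" by (auto simp: in_set_conv_nth)
    define y where "y = \<rho> x *\<^sub>v vs!j"
    have yS: "y \<in> S" using inv x vS[OF j] y_def by auto
    have coef: "ip d y (vs!l) = (if l = j then 1 else 0)" if "l < ?k" for l
    proof -
      have "ip d y (vs!l) = comp d \<rho> vs x $$ (l,j)" using that j by (simp add: comp_def y_def)
      thus ?thesis using cx that j by simp
    qed
    have "y = proj d vs y" using spn yS by simp
    also have "\<dots> = vs!j"
    proof (rule eq_vecI)
      fix r assume "r < dim_vec (vs!j)"
      hence r: "r < d" using vc[OF j] by auto
      have "proj d vs y $ r = (\<Sum>l<?k. ip d y (vs!l) * (vs!l $ r))"
        unfolding proj_def lc_def using r by simp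
      also have "\<dots> = (\<Sum>l<?k. if l = j then vs!j $ r else 0)"
        by (rule sum.cong) (auto simp: coef)
      also have "\<dots> = vs!j $ r" using j by simp
      finally show "proj d vs y $ r = vs!j $ r" .
    qed (use vc[OF j] in auto)
    finally show "\<rho> x *\<^sub>v v = v" using vj y_def by simp
  qed
qed




lemma onl_append1:
  assumes o: "onl d (a @ b)" shows "onl d a"
  unfolding onl_def
proof (intro conjI allI impI)
  show "set a \<subseteq> carrier_vec d" using o by (auto simp: onl_def)
  fix i j assume i: "i < length a" and j: "j < length a"
  have "ip d ((a@b)!i) ((a@b)!j) = (if i = j then 1 else 0)"
    by (rule onl_ip[OF o]) (use i j in auto)
  thus "ip d (a!i) (a!j) = (if i = j then 1 else 0)" using i j by (simp add: nth_append)
qed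

lemma onl_append2:
  assumes o: "onl d (a @ b)" shows "onl d b"
  unfolding onl_def
proof (intro conjI allI impI)
  show "set b \<subseteq> carrier_vec d" using o by (auto simp: onl_def)
  fix i j assume i: "i < length b" and j: "j < length b"
  have "ip d ((a@b)!(length a + i)) ((a@b)!(length a + j)) = (if length a + i = length a + j then 1 else 0)"
    by (rule onl_ip[OF o]) (use i j in auto)
  thus "ip d (b!i) (b!j) = (if i = j then 1 else 0)" by (simp add: nth_append)
qed

lemma carrier_subspace: "is_subspace d (carrier_vec d)"
  by (auto simp: is_subspace_def)

lemma mat_eq_one_by_vec:
  assumes A: "(A :: complex mat) \<in> carrier_mat d d" and fx: "\<And>x. x \<in> carrier_vec d \<Longrightarrow> A *\<^sub>v x = x"
  shows "A = 1\<^sub>m d"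
proof (rule eq_matI)
  fix i j assume "i < dim_row (1\<^sub>m d)" "j < dim_col (1\<^sub>m d)"
  hence i: "i < d" and j: "j < d" by auto
  have "(A *\<^sub>v unit_vec d j) $ i = (\<Sum>l<d. A $$ (i,l) * unit_vec d j $ l)"
    by (rule mult_vec_index[OF A _ i]) simp
  also have "\<dots> = (\<Sum>l<d. if l = j then A $$ (i,j) else 0)"
    by (rule sum.cong) (auto simp: unit_vec_def)
  also have "\<dots> = A $$ (i,j)" using j by simp
  finally have "A $$ (i,j) = (A *\<^sub>v unit_vec d j) $ i" by simp
  also have "\<dots> = unit_vec d j $ i" using fx[of "unit_vec d j"] by simp
  finally show "A $$ (i,j) = 1\<^sub>m d $$ (i,j)" using i j by (simp add: unit_vec_def)
qed (use A in auto)

lemma reduce: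
  fixes G (structure)
  assumes G: "group G" and gG: "g \<in> carrier G" and NC: "N \<subseteq> carrier G"
  shows "urep G d \<rho> \<Longrightarrow> (\<forall>x\<in>N. \<rho> x = 1\<^sub>m d) \<Longrightarrow> \<rho> g \<noteq> 1\<^sub>m d \<Longrightarrow>
    \<exists>d' \<rho>'. urep G d' \<rho>' \<and> irreducible_rep G d' \<rho>' \<and> (\<forall>x\<in>N. \<rho>' x = 1\<^sub>m d') \<and> \<rho>' g \<noteq> 1\<^sub>m d'"
proof (induction d arbitrary: \<rho> rule: less_induct)
  case (less d \<rho>)
  interpret group G by (rule G)
  have rep: "is_rep G d \<rho>" and un: "\<And>h. h \<in> carrier G \<Longrightarrow> \<rho> (inv h) = adj (\<rho> h)"
    using less.prems by (auto simp: urep_def)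
  have rc: "\<And>h. h \<in> carrier G \<Longrightarrow> \<rho> h \<in> carrier_mat d d" using rep by (auto simp: is_rep_def)
  have dpos: "d > 0"
  proof (rule ccontr)
    assume "\<not> d > 0" hence "d = 0" by simp
    hence "\<rho> g = 1\<^sub>m d" using rc[OF gG] by (intro eq_matI) auto
    thus False using less.prems by simp
  qed
  show ?case
  proof (cases "irreducible_rep G d \<rho>")
    case True thus ?thesis using less.prems by blast
  next
    case False
    then obtain W where W: "is_subspace d W" and W0: "W \<noteq> {0\<^sub>v d}" and Wc: "W \<noteq> carrier_vec d"
      and Winv: "\<forall>h\<in>carrier G. \<forall>w\<in>W. \<rho> h *\<^sub>v w \<in> W"
      using rep dpos unfolding irreducible_rep_def by blast
    have WC: "W \<subseteq> carrier_vec d" using W by (simp add: is_subspace_def)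
    have W0in: "0\<^sub>v d \<in> W" using W by (simp add: is_subspace_def)
    obtain us1 where o1: "onl d us1" and us1W: "set us1 \<subseteq> W" and sp1: "\<forall>x\<in>W. proj d us1 x = x"
      using ext_onl[OF W, of "[]"] by (auto simp: onl_def)
    obtain us2 where o12: "onl d (us1 @ us2)" and us2C: "set us2 \<subseteq> carrier_vec d"
      and sp12: "\<forall>x\<in>carrier_vec d. proj d (us1 @ us2) x = x"
      using ext_onl[OF carrier_subspace o1] o1 by (auto simp: onl_def)
    have o2: "onl d us2" using onl_append2[OF o12] .
    define k1 where "k1 = length us1"
    define k2 where "k2 = length us2"
    have len: "k1 + k2 \<le> d" using onl_length[OF o12] k1_def k2_def by simp
    have k1: "k1 > 0"
    proof (rule ccontr)
      assume "\<not> k1 > 0" hence "us1 = []" using k1_def by simp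
      obtain w where wW: "w \<in> W" and wne: "w \<noteq> 0\<^sub>v d" using W0 W0in by blast
      have "w = proj d us1 w" using sp1 wW by simp
      also have "\<dots> = 0\<^sub>v d" using \<open>us1 = []\<close> by (auto simp: proj_def lc_def)
      finally show False using wne by simp
    qed
    have k2: "k2 > 0"
    proof (rule ccontr)
      assume "\<not> k2 > 0" hence "us2 = []" using k2_def by simp
      have "carrier_vec d \<subseteq> W"
      proof
        fix x :: "complex vec" assume x: "x \<in> carrier_vec d"
        have "x = proj d us1 x" using sp12 x \<open>us2 = []\<close> by simp
        also have "\<dots> \<in> W" by (rule proj_in_subspace[OF W us1W])
        finally show "x \<in> W" .
      qed
      thus False using Wc WC by blast
    qed
    define S2 where "S2 = {x \<in> carrier_vec d. \<forall>w\<in>W. ip d x w = 0}"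
    have S2C: "S2 \<subseteq> carrier_vec d" by (auto simp: S2_def)
    have us2S2: "set us2 \<subseteq> S2"
    proof
      fix u assume "u \<in> set us2"
      then obtain j where j: "j < k2" and uj: "u = us2!j" by (auto simp: in_set_conv_nth k2_def)
      have u12: "u = (us1@us2)!(k1+j)" using uj k1_def by (simp add: nth_append)
      have "ip d u w = 0" if wW: "w \<in> W" for w
      proof -
        have "ip d u w = ip d u (proj d us1 w)" using sp1 wW by simp
        also have "\<dots> = (\<Sum>l<k1. cnj (ip d w (us1!l)) * ip d u (us1!l))"
          unfolding proj_def k1_def by (rule ip_lc_right)
        also have "\<dots> = 0"
        proof (rule sum.neutral, rule ballI)
          fix l assume "l \<in> {..<k1}"
          hence l: "l < k1" by simp
          have "ip d u (us1!l) = ip d ((us1@us2)!(k1+j)) ((us1@us2)!l)"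
            using u12 l k1_def by (simp add: nth_append)
          also have "\<dots> = 0" using onl_ip[OF o12, of "k1+j" l] l j k1_def k2_def by simp
          finally show "cnj (ip d w (us1!l)) * ip d u (us1!l) = 0" by simp
        qed
        finally show ?thesis .
      qed
      thus "u \<in> S2" using us2C \<open>u \<in> set us2\<close> by (auto simp: S2_def)
    qed
    have sp2: "\<forall>x\<in>S2. proj d us2 x = x"
    proof
      fix x assume xS: "x \<in> S2"
      hence x: "x \<in> carrier_vec d" by (auto simp: S2_def)
      have "proj d (us1 @ us2) x = proj d us2 x"
      proof (rule eq_vecI)
        fix r assume "r < dim_vec (proj d us2 x)"
        hence r: "r < d" by (simp add: proj_def)
        have "proj d (us1 @ us2) x $ r = (\<Sum>l<k1+k2. ip d x ((us1@us2)!l) * ((us1@us2)!l $ r))"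
          using r k1_def k2_def by (simp add: proj_def lc_def)
        also have "\<dots> = (\<Sum>l<k1. ip d x ((us1@us2)!l) * ((us1@us2)!l $ r))
             + (\<Sum>l<k2. ip d x ((us1@us2)!(k1+l)) * ((us1@us2)!(k1+l) $ r))"
          by (rule sum_lessThan_add_split)
        also have "(\<Sum>l<k1. ip d x ((us1@us2)!l) * ((us1@us2)!l $ r)) = 0"
        proof (rule sum.neutral, rule ballI)
          fix l assume "l \<in> {..<k1}"
          hence "(us1@us2)!l = us1!l" "us1!l \<in> W" using us1W k1_def by (auto simp: nth_append)
          thus "ip d x ((us1@us2)!l) * ((us1@us2)!l $ r) = 0" using xS by (auto simp: S2_def)
        qed
        also have "(\<Sum>l<k2. ip d x ((us1@us2)!(k1+l)) * ((us1@us2)!(k1+l) $ r))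
            = proj d us2 x $ r"
          using r k1_def k2_def by (simp add: proj_def lc_def nth_append)
        finally show "proj d (us1 @ us2) x $ r = proj d us2 x $ r" by simp
      qed (simp add: proj_def)
      thus "proj d us2 x = x" using sp12 x by simp
    qed
    have S2inv: "\<forall>h\<in>carrier G. \<forall>x\<in>S2. \<rho> h *\<^sub>v x \<in> S2"
    proof (intro ballI)
      fix h x assume h: "h \<in> carrier G" and xS: "x \<in> S2"
      hence x: "x \<in> carrier_vec d" by (auto simp: S2_def)
      have "ip d (\<rho> h *\<^sub>v x) w = 0" if wW: "w \<in> W" for w
      proof -
        have "ip d (\<rho> h *\<^sub>v x) w = ip d x (adj (\<rho> h) *\<^sub>v w)"
          by (rule ip_mult_adj[OF rc[OF h] x]) (use wW WC in auto)
        also have "adj (\<rho> h) *\<^sub>v w = \<rho> (inv h) *\<^sub>v w" using un[OF h] by simp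
        also have "ip d x \<dots> = 0" using xS Winv wW h by (auto simp: S2_def)
        finally show ?thesis .
      qed
      thus "\<rho> h *\<^sub>v x \<in> S2" using rc[OF h] x by (auto simp: S2_def)
    qed
    note c1 = comp_rep[OF G less.prems(1) o1 us1W WC sp1 Winv]
    note c2 = comp_rep[OF G less.prems(1) o2 us2S2 S2C sp2 S2inv]
    have NG: "\<forall>x\<in>N. \<rho> x = 1\<^sub>m d" using less.prems by simp
    show ?thesis
    proof (cases "comp d \<rho> us1 g = 1\<^sub>m (length us1)")
      case False
      have "k1 < d" using len k2 by simp
      moreover have "\<forall>x\<in>N. comp d \<rho> us1 x = 1\<^sub>m (length us1)"
      proof
        fix x assume "x \<in> N"
        moreover have "x \<in> carrier G" using NC \<open>x \<in> N\<close> by auto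
        ultimately show "comp d \<rho> us1 x = 1\<^sub>m (length us1)" using c1(2) NG by blast
      qed
      ultimately show ?thesis using less.IH[of k1 "comp d \<rho> us1"] c1(1) False k1_def by blast
    next
      case T1: True
      show ?thesis
      proof (cases "comp d \<rho> us2 g = 1\<^sub>m (length us2)")
        case False
        have "k2 < d" using len k1 by simp
        moreover have "\<forall>x\<in>N. comp d \<rho> us2 x = 1\<^sub>m (length us2)"
        proof
          fix x assume "x \<in> N"
          moreover have "x \<in> carrier G" using NC \<open>x \<in> N\<close> by auto
          ultimately show "comp d \<rho> us2 x = 1\<^sub>m (length us2)" using c2(2) NG by blast
        qed
        ultimately show ?thesis using less.IH[of k2 "comp d \<rho> us2"] c2(1) False k2_def by blast
      next
        case T2: True
        have fixv: "\<forall>v\<in>set (us1 @ us2). \<rho> g *\<^sub>v v = v"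
          using c1(3)[OF gG T1] c2(3)[OF gG T2] by auto
        have "\<rho> g = 1\<^sub>m d"
        proof (rule mat_eq_one_by_vec[OF rc[OF gG]])
          fix x :: "complex vec" assume x: "x \<in> carrier_vec d"
          have "\<rho> g *\<^sub>v x = \<rho> g *\<^sub>v proj d (us1@us2) x" using sp12 x by simp
          also have "\<dots> = lc d (length (us1@us2)) (\<lambda>l. ip d x ((us1@us2)!l)) (map (\<lambda>v. \<rho> g *\<^sub>v v) (us1@us2))"
            unfolding proj_def by (rule mult_lc[OF rc[OF gG]]) (use o12 onl_carrier in auto)
          also have "map (\<lambda>v. \<rho> g *\<^sub>v v) (us1@us2) = us1@us2"
            using fixv by (induction "us1@us2") (auto simp: map_idI)
          also have "lc d (length (us1@us2)) (\<lambda>l. ip d x ((us1@us2)!l)) (us1@us2) = x"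
            using sp12 x by (simp add: proj_def)
          finally show "\<rho> g *\<^sub>v x = x" .
        qed
        thus ?thesis using less.prems by simp
      qed
    qed
  qed
qed




lemma comm_in_ker:
  fixes G (structure)
  assumes G: "group G" and \<rho>: "urep G d \<rho>" and x: "x \<in> carrier G" and y: "y \<in> carrier G"
    and sc: "\<rho> x = c \<cdot>\<^sub>m 1\<^sub>m d"
  shows "\<rho> (inv x \<otimes> inv y \<otimes> x \<otimes> y) = 1\<^sub>m d"
proof -
  interpret group G by (rule G)
  have rep: "is_rep G d \<rho>" using \<rho> by (auto simp: urep_def)
  have rc: "\<And>h. h \<in> carrier G \<Longrightarrow> \<rho> h \<in> carrier_mat d d" using rep by (auto simp: is_rep_def)
  have r1: "\<rho> \<one> = 1\<^sub>m d" using rep by (auto simp: is_rep_def)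
  have rm: "\<And>h h'. h \<in> carrier G \<Longrightarrow> h' \<in> carrier G \<Longrightarrow> \<rho> (h \<otimes> h') = \<rho> h * \<rho> h'"
    using rep by (auto simp: is_rep_def)
  have iy: "inv y \<in> carrier G" using y by simp
  have "\<rho> (inv y \<otimes> x \<otimes> y) = \<rho> (inv y) * (c \<cdot>\<^sub>m 1\<^sub>m d) * \<rho> y"
    using rm iy x y sc by simp
  also have "\<dots> = c \<cdot>\<^sub>m (\<rho> (inv y) * \<rho> y)"
    using rc[OF iy] rc[OF y]
    by (simp add: mult_smult_distrib[of _ d d _ d] mult_smult_assoc_mat[of _ d d _ d])
  also have "\<rho> (inv y) * \<rho> y = 1\<^sub>m d" using rm[OF iy y] y r1 by simp
  finally have conj: "\<rho> (inv y \<otimes> x \<otimes> y) = \<rho> x" using sc by simp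
  have "inv x \<otimes> inv y \<otimes> x \<otimes> y = inv x \<otimes> (inv y \<otimes> x \<otimes> y)"
    using x y by (simp add: m_assoc)
  hence "\<rho> (inv x \<otimes> inv y \<otimes> x \<otimes> y) = \<rho> (inv x) * \<rho> x"
    using rm x y conj by simp
  also have "\<dots> = 1\<^sub>m d" using rm[of "inv x" x] x r1 by simp
  finally show ?thesis .
qed

lemma scalar_of_center:
  fixes G (structure)
  assumes G: "group G" and \<rho>: "urep G d \<rho>" and x: "x \<in> carrier G" and dpos: "d > 0"
    and tr: "cmod (mat_trace (\<rho> x)) = real d"
  shows "\<exists>c. \<rho> x = c \<cdot>\<^sub>m 1\<^sub>m d"
proof -
  interpret group G by (rule G)
  have rep: "is_rep G d \<rho>" and un: "\<And>h. h \<in> carrier G \<Longrightarrow> \<rho> (inv h) = adj (\<rho> h)"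
    using \<rho> by (auto simp: urep_def)
  have rc: "\<And>h. h \<in> carrier G \<Longrightarrow> \<rho> h \<in> carrier_mat d d" using rep by (auto simp: is_rep_def)
  have r1: "\<rho> \<one> = 1\<^sub>m d" using rep by (auto simp: is_rep_def)
  have rm: "\<And>h h'. h \<in> carrier G \<Longrightarrow> h' \<in> carrier G \<Longrightarrow> \<rho> (h \<otimes> h') = \<rho> h * \<rho> h'"
    using rep by (auto simp: is_rep_def)
  define A where "A = \<rho> x"
  have A: "A \<in> carrier_mat d d" using rc[OF x] A_def by simp
  have AA: "adj A * A = 1\<^sub>m d" using un[OF x] rm[of "inv x" x] x r1 A_def by simp
  have col: "(\<Sum>i<d. (cmod (A $$ (i,j)))^2) = 1" if j: "j < d" for j
  proof -
    have "(adj A * A) $$ (j,j) = (\<Sum>i<d. cnj (A $$ (i,j)) * A $$ (i,j))"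
      using A j by (auto simp: adj_def scalar_prod_def atLeast0LessThan intro!: sum.cong)
    also have "\<dots> = complex_of_real (\<Sum>i<d. (cmod (A $$ (i,j)))^2)"
      unfolding of_real_sum by (intro sum.cong refl) (simp only: complex_norm_square mult.commute)
    finally have e1: "(adj A * A) $$ (j,j) = complex_of_real (\<Sum>i<d. (cmod (A $$ (i,j)))^2)" .
    have e2: "(adj A * A) $$ (j,j) = 1" using AA j by simp
    have "complex_of_real (\<Sum>i<d. (cmod (A $$ (i,j)))^2) = 1" using e1 e2 by metis
    thus ?thesis by (simp only: of_real_eq_1_iff)
  qed
  have diag_le: "cmod (A $$ (i,i)) \<le> 1" if i: "i < d" for i
  proof -
    have "(cmod (A $$ (i,i)))^2 \<le> (\<Sum>l<d. (cmod (A $$ (l,i)))^2)"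
      by (rule member_le_sum) (use i in auto)
    hence sq: "(cmod (A $$ (i,i)))^2 \<le> 1" using col[OF i] by simp
    show ?thesis
    proof (rule ccontr)
      assume "\<not> cmod (A $$ (i,i)) \<le> 1"
      hence "1 < (cmod (A $$ (i,i)))^2" by (simp add: one_less_power)
      thus False using sq by simp
    qed
  qed
  define s where "s = (\<Sum>i<d. A $$ (i,i))"
  have s_tr: "s = mat_trace A" using A by (simp add: mat_trace_def s_def)
  have cs: "cmod s = real d" using tr s_tr A_def by simp
  define c where "c = s / of_nat d"
  have cc: "cmod c = 1" using cs dpos by (simp add: c_def norm_divide)
  have ccnj: "c * cnj c = 1"
  proof -
    have "c * cnj c = complex_of_real ((cmod c)^2)" by (simp only: complex_norm_square)
    thus ?thesis using cc by simp
  qed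
  define t where "t i = Re (cnj c * A $$ (i,i))" for i
  have tsum: "(\<Sum>i<d. t i) = real d"
  proof -
    have "(\<Sum>i<d. t i) = Re (cnj c * s)" by (simp add: t_def s_def sum_distrib_left)
    also have "cnj c * s = cnj s * s / of_nat d" by (simp add: c_def)
    also have "cnj s * s = complex_of_real ((cmod s)^2)"
      by (simp only: complex_norm_square mult.commute)
    also have "Re (complex_of_real ((cmod s)^2) / of_nat d) = (cmod s)^2 / real d"
      by (simp add: Re_divide_of_nat)
    also have "\<dots> = real d" using cs dpos by (simp add: power2_eq_square)
    finally show ?thesis .
  qed
  have tle: "t i \<le> 1" if i: "i < d" for i
  proof -
    have "t i \<le> cmod (cnj c * A $$ (i,i))" unfolding t_def by (rule complex_Re_le_cmod)
    also have "\<dots> = cmod (A $$ (i,i))" using cc by (simp add: norm_mult)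
    also have "\<dots> \<le> 1" by (rule diag_le[OF i])
    finally show ?thesis .
  qed
  have t1: "t i = 1" if i: "i < d" for i
  proof -
    have "(\<Sum>i<d. 1 - t i) = 0" using tsum by (simp add: sum_subtractf)
    moreover have "\<forall>i\<in>{..<d}. 0 \<le> 1 - t i" using tle by auto
    moreover have "(\<Sum>i<d. 1 - t i) = 0 \<longleftrightarrow> (\<forall>i\<in>{..<d}. 1 - t i = 0)"
      by (rule sum_nonneg_eq_0_iff) (use tle in auto)
    ultimately have "\<forall>i\<in>{..<d}. 1 - t i = 0" by simp
    thus ?thesis using i by auto
  qed
  have diag: "A $$ (i,i) = c" and dnorm: "cmod (A $$ (i,i)) = 1" if i: "i < d" for i
  proof -
    define z where "z = cnj c * A $$ (i,i)"
    have Rz: "Re z = 1" using t1[OF i] by (simp add: t_def z_def)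
    have cz: "cmod z \<le> 1" using diag_le[OF i] cc by (simp add: z_def norm_mult)
    have "(cmod z)^2 = (Re z)^2 + (Im z)^2" by (simp add: cmod_power2)
    moreover have "(cmod z)^2 \<le> 1" using cz by (simp add: power_le_one)
    moreover have "(Re z)^2 = 1" using Rz by simp
    ultimately have "(Im z)^2 \<le> 0" by linarith
    hence "Im z = 0" by simp
    hence z1: "z = 1" using Rz by (simp add: complex_eq_iff)
    have "A $$ (i,i) = c * cnj c * A $$ (i,i)" using ccnj by simp
    also have "\<dots> = c * z" by (simp add: z_def mult.assoc)
    finally show "A $$ (i,i) = c" using z1 by simp
    thus "cmod (A $$ (i,i)) = 1" using cc by simp
  qed
  have offd: "A $$ (i,j) = 0" if i: "i < d" and j: "j < d" and ij: "i \<noteq> j" for i j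
  proof -
    have "(\<Sum>l<d. (cmod (A $$ (l,j)))^2) = (cmod (A $$ (j,j)))^2 + (\<Sum>l\<in>{..<d} - {j}. (cmod (A $$ (l,j)))^2)"
      using j by (subst sum.remove[of "{..<d}" j]) auto
    hence "(\<Sum>l\<in>{..<d} - {j}. (cmod (A $$ (l,j)))^2) = 0" using col[OF j] dnorm[OF j] by simp
    moreover have "(\<Sum>l\<in>{..<d} - {j}. (cmod (A $$ (l,j)))^2) = 0 \<longleftrightarrow> (\<forall>l\<in>{..<d} - {j}. (cmod (A $$ (l,j)))^2 = 0)"
      by (rule sum_nonneg_eq_0_iff) auto
    ultimately have "\<forall>l\<in>{..<d} - {j}. (cmod (A $$ (l,j)))^2 = 0" by simp
    thus ?thesis using i ij by auto
  qed
  have "\<rho> x = c \<cdot>\<^sub>m 1\<^sub>m d"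
    unfolding A_def[symmetric]
    by (rule eq_matI) (use A diag offd in auto)
  thus ?thesis by blast
qed




lemma (in group) lcos_subgroup_self:
  assumes H: "subgroup H G" and k: "k \<in> H"
  shows "k <# H = H"
proof
  have kc: "k \<in> carrier G" using H k subgroup.subset by blast
  show "k <# H \<subseteq> H" using H k by (auto simp: l_coset_def subgroup.m_closed)
  show "H \<subseteq> k <# H"
  proof
    fix h assume h: "h \<in> H"
    have hc: "h \<in> carrier G" using H h subgroup.subset by blast
    have "inv k \<otimes> h \<in> H" using H k h by (simp add: subgroup.m_closed subgroup.m_inv_closed)
    moreover have "h = k \<otimes> (inv k \<otimes> h)" using kc hc by (simp add: m_assoc[symmetric])
    ultimately show "h \<in> k <# H" by (auto simp: l_coset_def)
  qed
qed

lemma perm_rep: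
  fixes G (structure)
  assumes G: "group G" and fin: "finite (carrier G)" and N: "N \<lhd> G"
    and g: "g \<in> carrier G" and gN: "g \<notin> N"
  shows "\<exists>d \<rho>. urep G d \<rho> \<and> (\<forall>x\<in>N. \<rho> x = 1\<^sub>m d) \<and> \<rho> g \<noteq> 1\<^sub>m d"
proof -
  interpret group G by (rule G)
  have NS: "subgroup N G" using N by (rule normal_imp_subgroup)
  have NC: "N \<subseteq> carrier G" using NS subgroup.subset by blast
  define Q where "Q = (\<lambda>a. a <# N) ` carrier G"
  have "finite Q" using fin Q_def by simp
  then obtain cs where csQ: "set cs = Q" and dist: "distinct cs" using finite_distinct_list by blast
  define m where "m = length cs"
  have cosj: "\<exists>a\<in>carrier G. cs!j = a <# N" if "j < m" for j
  proof -
    have "cs!j \<in> set cs" using that m_def by (simp only: nth_mem)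
    hence "cs!j \<in> (\<lambda>a. a <# N) ` carrier G" using csQ Q_def by simp
    thus ?thesis by (simp only: image_iff)
  qed
  have csC: "cs!j \<subseteq> carrier G" if jm: "j < m" for j
  proof -
    obtain a where a: "a \<in> carrier G" "cs!j = a <# N" using cosj[OF jm] by blast
    thus ?thesis using l_coset_subset_G[OF NC a(1)] by simp
  qed
  have inQ: "\<exists>i<m. cs!i = S" if "S \<in> Q" for S
    using that csQ m_def in_set_conv_nth[of S cs] by auto
  have act: "\<exists>i<m. cs!i = h <# cs!j" if h: "h \<in> carrier G" and j: "j < m" for h j
  proof -
    obtain a where a: "a \<in> carrier G" "cs!j = a <# N" using cosj[OF j] by blast
    have "h <# cs!j = (h \<otimes> a) <# N" using a h NC by (simp add: lcos_m_assoc)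
    hence "h <# cs!j \<in> Q" using a h Q_def by auto
    thus ?thesis using inQ by blast
  qed
  have uniq: "i = i'" if "i < m" "i' < m" "cs!i = cs!i'" for i i'
    using that dist m_def nth_eq_iff_index_eq[of cs i i'] by simp
  define \<rho> where "\<rho> h = mat m m (\<lambda>(i,j). if h <# cs!j = cs!i then 1 else (0::complex))" for h
  have rc: "\<rho> h \<in> carrier_mat m m" for h by (simp add: \<rho>_def)
  have dr: "dim_row (\<rho> h) = m" and dc: "dim_col (\<rho> h) = m" for h by (simp_all add: \<rho>_def)
  have ent: "\<rho> h $$ (i,j) = (if h <# cs!j = cs!i then 1 else 0)" if "i < m" "j < m" for h i j
    using that by (simp add: \<rho>_def)
  have one_ent: "\<rho> h = 1\<^sub>m m" if "\<And>j. j < m \<Longrightarrow> h <# cs!j = cs!j" for h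
  proof (rule eq_matI)
    fix i j assume "i < dim_row (1\<^sub>m m)" "j < dim_col (1\<^sub>m m)"
    hence i: "i < m" and j: "j < m" by auto
    show "\<rho> h $$ (i,j) = 1\<^sub>m m $$ (i,j)" using i j that[OF j] uniq[OF j i] by (auto simp: \<rho>_def)
  qed (auto simp: \<rho>_def)
  have hom: "\<rho> (h \<otimes> h') = \<rho> h * \<rho> h'" if h: "h \<in> carrier G" and h': "h' \<in> carrier G" for h h'
  proof (rule eq_matI)
    fix i j assume "i < dim_row (\<rho> h * \<rho> h')" "j < dim_col (\<rho> h * \<rho> h')"
    hence i: "i < m" and j: "j < m" by (simp_all add: dr dc)
    obtain l0 where l0: "l0 < m" "cs!l0 = h' <# cs!j" using act[OF h' j] by blast
    have "(\<rho> h * \<rho> h') $$ (i,j) = (\<Sum>l<m. \<rho> h $$ (i,l) * \<rho> h' $$ (l,j))"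
      using i j by (simp add: dr dc scalar_prod_def atLeast0LessThan)
    also have "\<dots> = (\<Sum>l<m. if l = l0 then \<rho> h $$ (i,l0) else 0)"
    proof (rule sum.cong[OF refl])
      fix l assume "l \<in> {..<m}"
      hence l: "l < m" by simp
      have "(h' <# cs!j = cs!l) \<longleftrightarrow> l = l0"
        using uniq[OF l l0(1)] l0(2) by metis
      hence "\<rho> h' $$ (l,j) = (if l = l0 then 1 else 0)"
        using ent[OF l j, of h'] by simp
      thus "\<rho> h $$ (i,l) * \<rho> h' $$ (l,j) = (if l = l0 then \<rho> h $$ (i,l0) else 0)" by simp
    qed
    also have "\<dots> = \<rho> h $$ (i,l0)" using l0 by simp
    also have "\<dots> = (if h <# (h' <# cs!j) = cs!i then 1 else 0)" using ent[OF i l0(1), of h] l0(2) by simp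
    also have "h <# (h' <# cs!j) = (h \<otimes> h') <# cs!j" using csC[OF j] h h' by (simp add: lcos_m_assoc)
    also have "(if (h \<otimes> h') <# cs!j = cs!i then 1 else 0) = \<rho> (h \<otimes> h') $$ (i,j)"
      using ent[OF i j] by simp
    finally show "\<rho> (h \<otimes> h') $$ (i,j) = (\<rho> h * \<rho> h') $$ (i,j)" by simp
  qed (simp_all add: dr dc)
  have r1: "\<rho> \<one> = 1\<^sub>m m" by (rule one_ent) (use csC lcos_mult_one in auto)
  have uni: "\<rho> (inv h) = adj (\<rho> h)" if h: "h \<in> carrier G" for h
  proof (rule eq_matI)
    fix i j assume "i < dim_row (adj (\<rho> h))" "j < dim_col (adj (\<rho> h))"
    hence i: "i < m" and j: "j < m" by (simp_all add: dr dc adj_def)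
    have ih: "inv h \<in> carrier G" using h by simp
    have "(inv h <# cs!j = cs!i) \<longleftrightarrow> (h <# cs!i = cs!j)"
    proof
      assume e: "inv h <# cs!j = cs!i"
      have "h <# cs!i = h <# (inv h <# cs!j)" using e by simp
      also have "\<dots> = (h \<otimes> inv h) <# cs!j" using csC[OF j] h ih by (simp add: lcos_m_assoc)
      also have "\<dots> = cs!j" using h csC[OF j] by (simp add: lcos_mult_one)
      finally show "h <# cs!i = cs!j" .
    next
      assume e: "h <# cs!i = cs!j"
      have "inv h <# cs!j = inv h <# (h <# cs!i)" using e by simp
      also have "\<dots> = (inv h \<otimes> h) <# cs!i" using csC[OF i] h ih by (simp add: lcos_m_assoc)
      also have "\<dots> = cs!i" using h csC[OF i] by (simp add: lcos_mult_one)
      finally show "inv h <# cs!j = cs!i" .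
    qed
    moreover have "adj (\<rho> h) $$ (i,j) = cnj (\<rho> h $$ (j,i))" using i j by (simp add: adj_def dr dc)
    ultimately show "\<rho> (inv h) $$ (i,j) = adj (\<rho> h) $$ (i,j)" using ent[OF i j, of "inv h"] ent[OF j i, of h] by simp
  qed (simp_all add: dr dc adj_def)
  have "urep G m \<rho>" unfolding urep_def is_rep_def using rc r1 hom uni by blast
  moreover have "\<forall>x\<in>N. \<rho> x = 1\<^sub>m m"
  proof
    fix n assume n: "n \<in> N"
    have nc: "n \<in> carrier G" using n NC by auto
    show "\<rho> n = 1\<^sub>m m"
    proof (rule one_ent)
      fix j assume j: "j < m"
      obtain a where a: "a \<in> carrier G" "cs!j = a <# N" using cosj[OF j] by blast
      define k where "k = inv a \<otimes> n \<otimes> a"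
      have k: "k \<in> N" unfolding k_def using N a n by (simp add: normal.inv_op_closed1)
      have kc: "k \<in> carrier G" using k NC by auto
      have "n \<otimes> a = a \<otimes> k" using a nc by (simp add: k_def m_assoc[symmetric])
      have "n <# cs!j = (n \<otimes> a) <# N" using a nc NC by (simp add: lcos_m_assoc)
      also have "\<dots> = (a \<otimes> k) <# N" using \<open>n \<otimes> a = a \<otimes> k\<close> by simp
      also have "\<dots> = a <# (k <# N)" using a kc NC by (simp add: lcos_m_assoc)
      also have "k <# N = N" by (rule lcos_subgroup_self[OF NS k])
      finally show "n <# cs!j = cs!j" using a by simp
    qed
  qed
  moreover have "\<rho> g \<noteq> 1\<^sub>m m"
  proof
    assume rg: "\<rho> g = 1\<^sub>m m"
    have "N \<in> Q" unfolding Q_def using lcos_mult_one[OF NC] by force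
    then obtain j where j: "j < m" "cs!j = N" using inQ by blast
    have "g \<otimes> \<one> \<in> g <# N" using subgroup.one_closed[OF NS] unfolding l_coset_def by blast
    hence "g \<in> g <# N" using g by simp
    hence "g <# N \<noteq> N" using gN by auto
    hence "\<rho> g $$ (j,j) = 0" using ent[OF j(1) j(1), of g] j(2) by simp
    thus False using rg j by simp
  qed
  ultimately show ?thesis by blast
qed




lemma chain_mono:
  assumes dec: "\<And>i. i < n \<Longrightarrow> C (Suc i) \<subset> C i"
  shows "i \<le> j \<Longrightarrow> j \<le> n \<Longrightarrow> C j \<subseteq> C i"
proof (induction j)
  case 0 thus ?case by simp
next
  case (Suc j)
  show ?case
  proof (cases "i = Suc j")
    case True thus ?thesis by simp
  next
    case False
    hence "i \<le> j" using Suc.prems by simp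
    hence "C j \<subseteq> C i" using Suc by simp
    moreover have "C (Suc j) \<subseteq> C j" using dec[of j] Suc.prems by auto
    ultimately show ?thesis by blast
  qed
qed

theorem lemma4p1:
  fixes G (structure) and C :: "nat \<Rightarrow> 'a set" and n :: nat and N :: "'a set"
  assumes "group G" and "finite (carrier G)" and "nested G"
    and "C 0 = carrier G"
    and "\<And>i. i < n \<Longrightarrow> C (Suc i) \<subset> C i"
    and "{C i | i. i \<le> n} = char_center G ` Irr G"
    and "N \<lhd> G"
  shows "\<forall>i \<in> {1..n}. commutator_subgroup G (C (i - 1)) (carrier G) \<subseteq> N \<or> N \<subseteq> C i"
proof
  note G = assms(1) and fin = assms(2) and dec = assms(5) and CI = assms(6) and N = assms(7)
  interpret group G by (rule G)
  have NS: "subgroup N G" using N by (rule normal_imp_subgroup)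
  have NC: "N \<subseteq> carrier G" using NS subgroup.subset by blast
  have Ccar: "C j \<subseteq> carrier G" if "j \<le> n" for j
  proof -
    have "C j \<in> char_center G ` Irr G" using CI that by blast
    thus ?thesis by (auto simp: char_center_def)
  qed
  fix i assume i: "i \<in> {1..n}"
  show "commutator_subgroup G (C (i - 1)) (carrier G) \<subseteq> N \<or> N \<subseteq> C i"
  proof (cases "N \<subseteq> C i")
    case True thus ?thesis by simp
  next
    case NCi: False
    define Xs where "Xs = (\<Union>a\<in>C (i - 1). \<Union>b\<in>carrier G. {inv a \<otimes> inv b \<otimes> a \<otimes> b})"
    have "i \<le> n" using i by simp
    hence "i - 1 \<le> n" using diff_le_self[of i 1] by (rule_tac le_trans) auto
    hence Ci1: "C (i - 1) \<subseteq> carrier G" by (rule Ccar)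
    have Xc: "Xs \<subseteq> carrier G" using Ci1 by (auto simp: Xs_def intro!: m_closed)
    have "commutator_subgroup G (C (i - 1)) (carrier G) \<subseteq> N"
    proof
      fix g assume gcs: "g \<in> commutator_subgroup G (C (i - 1)) (carrier G)"
      hence gX: "g \<in> generate G Xs" by (simp add: commutator_subgroup_def Xs_def)
      have gG: "g \<in> carrier G" using generate_incl[OF Xc] gX by blast
      show "g \<in> N"
      proof (rule ccontr)
        assume gN: "g \<notin> N"
        obtain d0 \<rho>0 where \<rho>0: "urep G d0 \<rho>0" "\<forall>x\<in>N. \<rho>0 x = 1\<^sub>m d0" "\<rho>0 g \<noteq> 1\<^sub>m d0"
          using perm_rep[OF G fin N gG gN] by blast
        obtain d \<rho> where \<rho>: "urep G d \<rho>" "irreducible_rep G d \<rho>" "\<forall>x\<in>N. \<rho> x = 1\<^sub>m d" "\<rho> g \<noteq> 1\<^sub>m d"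
          using reduce[OF G gG NC \<rho>0] by blast
        have rep: "is_rep G d \<rho>" and dpos: "d > 0" using \<rho>(2) by (auto simp: irreducible_rep_def)
        have rc: "\<And>h. h \<in> carrier G \<Longrightarrow> \<rho> h \<in> carrier_mat d d" using rep by (auto simp: is_rep_def)
        have r1: "\<rho> \<one> = 1\<^sub>m d" using rep by (auto simp: is_rep_def)
        have rm: "\<And>h h'. h \<in> carrier G \<Longrightarrow> h' \<in> carrier G \<Longrightarrow> \<rho> (h \<otimes> h') = \<rho> h * \<rho> h'"
          using rep by (auto simp: is_rep_def)
        have un: "\<And>h. h \<in> carrier G \<Longrightarrow> \<rho> (inv h) = adj (\<rho> h)" using \<rho>(1) by (auto simp: urep_def)
        define ch where "ch x = (if x \<in> carrier G then mat_trace (\<rho> x) else 0)" for x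
        have chiI: "ch \<in> Irr G" unfolding Irr_def using \<rho>(2) ch_def by blast
        have tr1: "mat_trace (1\<^sub>m d) = of_nat d" by (simp add: mat_trace_def)
        have chi1: "ch \<one> = of_nat d" using r1 tr1 by (simp add: ch_def)
        have "char_center G ch \<in> {C i | i. i \<le> n}" using CI chiI by simp
        then obtain j where j: "j \<le> n" and Cj: "C j = char_center G ch" by auto
        have "N \<subseteq> C j"
        proof
          fix x assume xN: "x \<in> N"
          hence xG: "x \<in> carrier G" using NC by auto
          have "ch x = of_nat d" using \<rho>(3) xN xG tr1 by (simp add: ch_def)
          thus "x \<in> C j" using Cj xG chi1 by (simp add: char_center_def)
        qed
        hence ji: "j < i"
        proof -
          assume NCj: "N \<subseteq> C j"
          show "j < i"
          proof (rule ccontr)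
            assume "\<not> j < i"
            hence "C j \<subseteq> C i" using chain_mono[of n C i j, OF dec] j by simp
            thus False using NCj NCi by blast
          qed
        qed
        have Cij: "C (i - 1) \<subseteq> C j" using chain_mono[of n C j "i - 1", OF dec] ji i by simp
        define K where "K = {x \<in> carrier G. \<rho> x = 1\<^sub>m d}"
        have adj1: "adj (1\<^sub>m d) = 1\<^sub>m d" by (auto simp: adj_def)
        have KS: "subgroup K G"
        proof (rule subgroupI)
          show "K \<subseteq> carrier G" by (auto simp: K_def)
          show "K \<noteq> {}" using r1 by (auto simp: K_def)
          fix a assume a: "a \<in> K"
          thus "inv a \<in> K" using un adj1 by (auto simp: K_def)
          fix b assume b: "b \<in> K"
          show "a \<otimes> b \<in> K" using a b rm by (auto simp: K_def)
        qed
        have "Xs \<subseteq> K"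
        proof
          fix z assume "z \<in> Xs"
          then obtain a b where a: "a \<in> C (i - 1)" and b: "b \<in> carrier G"
            and z: "z = inv a \<otimes> inv b \<otimes> a \<otimes> b" by (auto simp: Xs_def)
          have aC: "a \<in> char_center G ch" using a Cij Cj by auto
          hence aG: "a \<in> carrier G" by (simp add: char_center_def)
          have "complex_of_real (cmod (ch a)) = of_nat d" using aC chi1 by (simp add: char_center_def)
          hence "complex_of_real (cmod (mat_trace (\<rho> a))) = complex_of_real (real d)"
            using aG by (simp add: ch_def)
          hence "cmod (mat_trace (\<rho> a)) = real d" by (simp only: of_real_eq_iff)
          then obtain c where "\<rho> a = c \<cdot>\<^sub>m 1\<^sub>m d" using scalar_of_center[OF G \<rho>(1) aG dpos] by blast
          hence "\<rho> z = 1\<^sub>m d" using comm_in_ker[OF G \<rho>(1) aG b] z by blast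
          thus "z \<in> K" using z aG b by (simp add: K_def)
        qed
        hence "generate G Xs \<subseteq> K" using generate_subgroup_incl KS by blast
        hence "\<rho> g = 1\<^sub>m d" using gX by (auto simp: K_def)
        thus False using \<rho>(4) by simp
      qed
    qed
    thus ?thesis by simp
  qed
qed


end
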